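(* Let $(a_i)_{i\ge1},(b_i)_{i\ge1}$ be positive reals, let $V_i\sim\mathrm{Beta}(a_i,b_i)$ be independent, and let $\Pi$ be the law of $\mathbf p=(p_i)_{i\ge1}$ with $p_1=V_1$, $p_i=V_i\prod_{l<i}(1-V_l)$. Then for every $\epsilon>0$ and every $\mathbf p^*\in\mathcal S$, $$\Pi\big(\mathbf p:\ \|\mathbf p^*-\mathbf p\|_1<\epsilon\big)>0,$$ where $\|\mathbf p^*-\mathbf p\|_1=\sum_{i\ge1}|p^*_i-p_i|$.
   Context: $\mathcal S=\{\mathbf p=(p_i)_{i\ge1}:\ \sum_{i\ge1}p_i=1,\ p_i>0\ \forall i\ge1\}$ is the infinite-dimensional open simplex. *)

theory Defs
  imports "HOL-Probability.Probability"
begin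

definition beta_density :: "real \<Rightarrow> real \<Rightarrow> real \<Rightarrow> real" where
  "beta_density a b x =
     (if 0 < x \<and> x < 1 then x powr (a - 1) * (1 - x) powr (b - 1) / Beta a b else 0)"

text \<open>Infinite-dimensional open simplex (indices shifted to start at 0).\<close>
definition open_simplex :: "(nat \<Rightarrow> real) set" where
  "open_simplex = {p. (\<forall>i. 0 < p i) \<and> p sums 1}"

definition stick_breaking :: "(nat \<Rightarrow> real) \<Rightarrow> nat \<Rightarrow> real" where
  "stick_breaking v i = v i * (\<Prod>l<i. 1 - v l)"

end

theory Submission
  imports Defs
begin


lemma P_lip:
  fixes v c :: "nat \<Rightarrow> real"
  assumes "\<And>l. l < n \<Longrightarrow> v l \<in> {0..1} \<and> c l \<in> {0..1}"
  shows "\<bar>(\<Prod>l<n. 1 - v l) - (\<Prod>l<n. 1 - c l)\<bar> \<le> (\<Sum>l<n. \<bar>v l - c l\<bar>)"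
  using assms
proof (induction n)
  case 0 then show ?case by simp
next
  case (Suc n)
  define A where "A = (\<Prod>l<n. 1 - v l)"
  define B where "B = (\<Prod>l<n. 1 - c l)"
  have A: "0 \<le> A" "A \<le> 1" unfolding A_def using Suc.prems
    by (auto intro!: prod_nonneg prod_le_1)
  have B: "0 \<le> B" "B \<le> 1" unfolding B_def using Suc.prems
    by (auto intro!: prod_nonneg prod_le_1)
  have IH: "\<bar>A - B\<bar> \<le> (\<Sum>l<n. \<bar>v l - c l\<bar>)" unfolding A_def B_def
    using Suc by auto
  have vn: "0 \<le> v n" "v n \<le> 1" "0 \<le> c n" "c n \<le> 1" using Suc.prems[of n] by auto
  have "A * (1 - v n) - B * (1 - c n) = (A - B) * (1 - v n) + B * (c n - v n)"
    by (simp add: algebra_simps)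
  hence "\<bar>A * (1 - v n) - B * (1 - c n)\<bar> \<le> \<bar>(A - B) * (1 - v n)\<bar> + \<bar>B * (c n - v n)\<bar>"
    by (metis abs_triangle_ineq)
  also have "\<bar>(A - B) * (1 - v n)\<bar> = \<bar>A - B\<bar> * (1 - v n)" using vn by (simp add: abs_mult)
  also have "\<bar>B * (c n - v n)\<bar> = B * \<bar>c n - v n\<bar>" using B by (simp add: abs_mult)
  also have "\<bar>A - B\<bar> * (1 - v n) \<le> \<bar>A - B\<bar>" using vn by (intro mult_left_le) auto
  also have "B * \<bar>c n - v n\<bar> \<le> \<bar>v n - c n\<bar>" using B by (subst abs_minus_commute) (intro mult_left_le_one_le, auto)
  also have "\<bar>A - B\<bar> + \<bar>v n - c n\<bar> \<le> (\<Sum>l<Suc n. \<bar>v l - c l\<bar>)" using IH by simp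
  finally show ?case by (simp add: A_def B_def)
qed

lemma sb_partial: "(\<Sum>i<n. stick_breaking v i) = 1 - (\<Prod>l<n. 1 - v l)"
  by (induction n) (simp_all add: stick_breaking_def algebra_simps)


lemma det_main:
  fixes pstar :: "nat \<Rightarrow> real" and \<epsilon> :: real
  assumes ps: "pstar \<in> open_simplex" and eps: "0 < \<epsilon>"
  shows "\<exists>N c \<delta>. 0 < \<delta> \<and> (\<forall>i. 0 < c i \<and> c i < 1) \<and>
     (\<forall>v. (\<forall>i. v i \<in> {0..1}) \<and> (\<forall>i<N. \<bar>v i - c i\<bar> < \<delta>) \<longrightarrow>
        (\<Sum>i. \<bar>pstar i - stick_breaking v i\<bar>) < \<epsilon>)"
proof -
  have pos: "\<And>i. 0 < pstar i" and sums: "pstar sums 1"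
    using ps by (auto simp: open_simplex_def)
  have summ: "summable pstar" using sums by (rule sums_summable)
  define R where "R n = 1 - (\<Sum>l<n. pstar l)" for n
  have R_eq: "R n = (\<Sum>k. pstar (k + n))" for n
    using suminf_minus_initial_segment[OF summ, of n] sums_unique[OF sums]
    by (simp add: R_def)
  have Rpos: "0 < R n" for n
    unfolding R_eq using pos summ by (intro suminf_pos) (auto simp: summable_iff_shift)
  have RSuc: "R (Suc n) = R n - pstar n" for n by (simp add: R_def)
  define c where "c i = pstar i / R i" for i
  have c01: "0 < c i \<and> c i < 1" for i
    using Rpos[of i] Rpos[of "Suc i"] pos[of i] RSuc[of i] by (auto simp: c_def field_simps)
  have Pc: "(\<Prod>l<n. 1 - c l) = R n" for n
  proof (induction n)
    case 0 then show ?case by (simp add: R_def)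
  next
    case (Suc n)
    then show ?case using Rpos[of n] RSuc[of n] by (simp add: c_def field_simps) (metis distrib_left)
  qed
  have sbc: "stick_breaking c i = pstar i" for i
    using Rpos[of i] Pc[of i] by (simp add: stick_breaking_def c_def)
  have "(\<lambda>n. \<Sum>l<n. pstar l) \<longlonglongrightarrow> 1" using sums by (simp add: sums_def)
  hence "(\<lambda>n. 1 - (\<Sum>l<n. pstar l)) \<longlonglongrightarrow> 1 - 1"
    by (intro tendsto_diff tendsto_const)
  hence "R \<longlonglongrightarrow> 0" unfolding R_def[abs_def] by simp
  hence "eventually (\<lambda>n. R n < \<epsilon>/4) sequentially"
    using eps by (intro order_tendstoD(2)) auto
  then obtain N where RN: "R N < \<epsilon>/4" by (auto simp: eventually_sequentially)
  define \<delta> where "\<delta> = \<epsilon> / (4 * (real N + 1)^2)"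
  have dpos: "0 < \<delta>" using eps by (simp add: \<delta>_def)
  have dN: "(real N * real N + real N) * \<delta> \<le> \<epsilon>/4"
  proof -
    have "(real N * real N + real N) \<le> (real N + 1)^2" by (simp add: power2_eq_square algebra_simps)
    hence "(real N * real N + real N) * \<delta> \<le> (real N + 1)^2 * \<delta>" using dpos by (intro mult_right_mono) auto
    also have "\<dots> = \<epsilon>/4" by (simp add: \<delta>_def)
    finally show ?thesis .
  qed
  have main: "(\<Sum>i. \<bar>pstar i - stick_breaking v i\<bar>) < \<epsilon>"
    if v01: "\<forall>i. v i \<in> {0..1}" and vc: "\<forall>i<N. \<bar>v i - c i\<bar> < \<delta>" for v
  proof -
    define f where "f i = \<bar>pstar i - stick_breaking v i\<bar>" for i
    have f0: "0 \<le> f i" for i by (simp add: f_def)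
    have c01': "c l \<in> {0..1}" for l using c01[of l] by auto
    have termb: "f i \<le> real N * \<delta>" if i: "i < N" for i
    proof -
      define A where "A = (\<Prod>l<i. 1 - v l)"
      define B where "B = (\<Prod>l<i. 1 - c l)"
      have B: "0 \<le> B" "B \<le> 1" unfolding B_def using c01'
        by (auto intro!: prod_nonneg prod_le_1)
      have lip: "\<bar>A - B\<bar> \<le> (\<Sum>l<i. \<bar>v l - c l\<bar>)" unfolding A_def B_def
        using v01 c01' by (intro P_lip) auto
      also have "\<dots> \<le> real (card {..<i}) * \<delta>"
      proof (intro sum_bounded_above)
        fix l assume "l \<in> {..<i}"
        hence "l < N" using i by simp
        thus "\<bar>v l - c l\<bar> \<le> \<delta>" using vc by (auto intro: less_imp_le)
      qed
      finally have lip': "\<bar>A - B\<bar> \<le> real i * \<delta>" by simp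
      have "f i = \<bar>c i * B - v i * A\<bar>"
        by (simp add: f_def sbc[symmetric] stick_breaking_def A_def B_def)
      also have "c i * B - v i * A = (c i - v i) * B + v i * (B - A)" by (simp add: algebra_simps)
      also have "\<bar>(c i - v i) * B + v i * (B - A)\<bar> \<le> \<bar>(c i - v i) * B\<bar> + \<bar>v i * (B - A)\<bar>"
        by (rule abs_triangle_ineq)
      also have "\<bar>(c i - v i) * B\<bar> = \<bar>c i - v i\<bar> * B" using B by (simp add: abs_mult)
      also have "\<bar>v i * (B - A)\<bar> = v i * \<bar>B - A\<bar>" using v01 by (simp add: abs_mult)
      also have "\<bar>c i - v i\<bar> * B \<le> \<delta>"
      proof -
        have "\<bar>c i - v i\<bar> * B \<le> \<bar>c i - v i\<bar>" using B by (intro mult_right_le_one_le) auto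
        also have "\<dots> < \<delta>" using vc i by (simp add: abs_minus_commute)
        finally show ?thesis by simp
      qed
      also have "v i * \<bar>B - A\<bar> \<le> real i * \<delta>"
      proof -
        have "v i * \<bar>B - A\<bar> \<le> \<bar>B - A\<bar>" using v01[rule_format, of i] by (intro mult_left_le_one_le) auto
        thus ?thesis using lip' by (simp add: abs_minus_commute)
      qed
      also have "\<delta> + real i * \<delta> = (real i + 1) * \<delta>" by (simp add: algebra_simps)
      also have "\<dots> \<le> real N * \<delta>"
      proof -
        have "real i + 1 \<le> real N" using i by linarith
        thus ?thesis using dpos by (intro mult_right_mono) auto
      qed
      finally show ?thesis by simp
    qed
    have headN: "(\<Sum>i<N. f i) \<le> real N * real N * \<delta>"
      using sum_bounded_above[of "{..<N}" f "real N * \<delta>"] termb by simp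
    have PN: "(\<Prod>l<N. 1 - v l) \<le> R N + real N * \<delta>"
    proof -
      have "\<bar>(\<Prod>l<N. 1 - v l) - (\<Prod>l<N. 1 - c l)\<bar> \<le> (\<Sum>l<N. \<bar>v l - c l\<bar>)"
        using v01 c01' by (intro P_lip) auto
      also have "\<dots> \<le> real (card {..<N}) * \<delta>"
        using vc by (intro sum_bounded_above) auto
      finally show ?thesis using Pc[of N] by simp
    qed
    have Pm: "0 \<le> (\<Prod>l<m. 1 - v l)" for m using v01 by (auto intro!: prod_nonneg)
    define Bd where "Bd = real N * real N * \<delta> + R N + (R N + real N * \<delta>)"
    have X: "real N * real N * \<delta> + real N * \<delta> \<le> \<epsilon>/4"
      using dN by (simp add: distrib_right)
    have "Bd = (real N * real N * \<delta> + real N * \<delta>) + 2 * R N" by (simp add: Bd_def)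
    hence Bd: "Bd < \<epsilon>" using X RN eps by linarith
    have part: "(\<Sum>i<n. f i) \<le> Bd" for n
    proof -
      define m where "m = max n N"
      have s1: "(\<Sum>i<n. f i) \<le> (\<Sum>i<m. f i)"
        using f0 by (intro sum_mono2) (auto simp: m_def)
      have Nm: "N \<le> m" by (simp add: m_def)
      have s2: "(\<Sum>i<m. f i) = (\<Sum>i<N. f i) + (\<Sum>i\<in>{N..<m}. f i)"
        using sum.atLeastLessThan_concat[of 0 N m f] Nm by (simp add: atLeast0LessThan)
      have s3: "(\<Sum>i\<in>{N..<m}. f i) \<le> (\<Sum>i\<in>{N..<m}. pstar i) + (\<Sum>i\<in>{N..<m}. stick_breaking v i)"
      proof -
        have "f i \<le> pstar i + stick_breaking v i" for i
        proof -
          have "0 \<le> v i" using v01 by auto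
          hence "0 \<le> stick_breaking v i" using Pm[of i]
            unfolding stick_breaking_def by (rule mult_nonneg_nonneg)
          thus ?thesis using pos[of i] by (simp add: f_def)
        qed
        hence "(\<Sum>i\<in>{N..<m}. f i) \<le> (\<Sum>i\<in>{N..<m}. pstar i + stick_breaking v i)"
          by (rule sum_mono)
        thus ?thesis by (simp add: sum.distrib)
      qed
      have s4: "(\<Sum>i\<in>{N..<m}. pstar i) = R N - R m"
        using sum_diff_nat_ivl[of 0 N m pstar] Nm by (simp add: R_def atLeast0LessThan)
      have s5: "(\<Sum>i\<in>{N..<m}. stick_breaking v i) = (\<Prod>l<N. 1 - v l) - (\<Prod>l<m. 1 - v l)"
        using sum_diff_nat_ivl[of 0 N m "stick_breaking v"] Nm
        by (simp add: sb_partial atLeast0LessThan)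
      show ?thesis using s1 s2 s3 s4 s5 headN PN Pm[of m] Rpos[of m] unfolding Bd_def by linarith
    qed
    have part': "(\<Sum>k\<le>n. f k) \<le> Bd" for n
    proof -
      have "{..n} = {..<Suc n}" by auto
      thus ?thesis using part[of "Suc n"] by simp
    qed
    have sf: "summable f" by (rule bounded_imp_summable[OF f0 part'])
    have "suminf f \<le> Bd" by (rule suminf_le_const[OF sf part])
    moreover have "suminf f = (\<Sum>i. \<bar>pstar i - stick_breaking v i\<bar>)" by (simp add: f_def[abs_def])
    ultimately show ?thesis using Bd by linarith
  qed
  show ?thesis
  proof (intro exI[of _ N] exI[of _ c] exI[of _ \<delta>] conjI allI impI)
    show "0 < \<delta>" by (rule dpos)
  next
    fix i show "0 < c i" using c01[of i] by (rule conjunct1)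
  next
    fix i show "c i < 1" using c01[of i] by (rule conjunct2)
  next
    fix v :: "nat \<Rightarrow> real"
    assume h: "(\<forall>i. v i \<in> {0..1}) \<and> (\<forall>i<N. \<bar>v i - c i\<bar> < \<delta>)"
    show "(\<Sum>i. \<bar>pstar i - stick_breaking v i\<bar>) < \<epsilon>"
      by (rule main[OF conjunct1[OF h] conjunct2[OF h]])
  qed
qed




lemma beta_density_pos:
  assumes "0 < a" "0 < b" "0 < x" "x < 1"
  shows "0 < beta_density a b x"
proof -
  have "0 < Beta a b" using assms by (simp add: Beta_def)
  thus ?thesis using assms by (simp add: beta_density_def)
qed

lemma beta_density_supp: "0 < beta_density a b x \<Longrightarrow> 0 < x \<and> x < 1"
  by (simp add: beta_density_def split: if_splits)

theorem propositionS2: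
  fixes M :: "'w measure" and V :: "nat \<Rightarrow> 'w \<Rightarrow> real"
    and a b :: "nat \<Rightarrow> real" and pstar :: "nat \<Rightarrow> real" and \<epsilon> :: real
  assumes "prob_space M"
    and "\<And>i. 0 < a i" and "\<And>i. 0 < b i"
    and "prob_space.indep_vars M (\<lambda>_. borel) V UNIV"
    and "\<And>i. distributed M lborel (V i) (\<lambda>x. ennreal (beta_density (a i) (b i) x))"
    and "pstar \<in> open_simplex"
    and "0 < \<epsilon>"
  shows "measure M {\<omega> \<in> space M.
           (\<Sum>i. \<bar>pstar i - stick_breaking (\<lambda>l. V l \<omega>) i\<bar>) < \<epsilon>} > 0"
proof -
  interpret prob_space M by fact
  note dist = assms(5)
  have Vm[measurable]: "V i \<in> borel_measurable M" for i
    using dist[of i] by (simp add: distributed_def)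
  have distr_eq: "distr M lborel (V i) = density lborel (\<lambda>x. ennreal (beta_density (a i) (b i) x))" for i
    using dist[of i] by (simp add: distributed_def)
  have fm[measurable]: "(\<lambda>x. ennreal (beta_density (a i) (b i) x)) \<in> borel_measurable lborel" for i
    using dist[of i] by (simp add: distributed_def)
  obtain N c \<delta> where H: "0 < \<delta> \<and> (\<forall>i. 0 < c i \<and> c i < 1) \<and>
     (\<forall>v. (\<forall>i. v i \<in> {0..1}) \<and> (\<forall>i<N. \<bar>v i - c i\<bar> < \<delta>) \<longrightarrow>
        (\<Sum>i. \<bar>pstar i - stick_breaking v i\<bar>) < \<epsilon>)"
    using det_main[OF assms(6,7)] by (elim exE) (rule that)
  have dpos: "0 < \<delta>" using H by (rule conjunct1)
  have c01: "0 < c i \<and> c i < 1" for i using H by simp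
  have det: "(\<Sum>i. \<bar>pstar i - stick_breaking v i\<bar>) < \<epsilon>"
    if "(\<forall>i. v i \<in> {0..1}) \<and> (\<forall>i<N. \<bar>v i - c i\<bar> < \<delta>)" for v
    using H that by blast
  define A where "A i = V i -` {c i - \<delta> <..< c i + \<delta>} \<inter> space M" for i
  have Asets: "A i \<in> sets M" for i unfolding A_def by measurable
  have Apos: "0 < prob (A i)" for i
  proof (rule ccontr)
    assume "\<not> 0 < prob (A i)"
    hence "prob (A i) = 0" using measure_nonneg[of M "A i"] by linarith
    hence "emeasure M (A i) = 0" by (simp add: emeasure_eq_measure)
    hence "emeasure (distr M lborel (V i)) {c i - \<delta> <..< c i + \<delta>} = 0"
      by (subst emeasure_distr) (auto simp: A_def)
    hence "(\<integral>\<^sup>+ x. ennreal (beta_density (a i) (b i) x) * indicator {c i - \<delta> <..< c i + \<delta>} x \<partial>lborel) = 0"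
      by (simp add: distr_eq emeasure_density)
    hence AE0: "AE x in lborel. ennreal (beta_density (a i) (b i) x) * indicator {c i - \<delta> <..< c i + \<delta>} x = 0"
      by (subst (asm) nn_integral_0_iff_AE) auto
    define J where "J = {max 0 (c i - \<delta>) <..< min 1 (c i + \<delta>)}"
    have "AE x in lborel. x \<notin> J"
      using AE0
    proof eventually_elim
      case (elim x)
      show ?case
      proof
        assume x: "x \<in> J"
        hence "x \<in> {c i - \<delta> <..< c i + \<delta>}" "0 < x" "x < 1" by (auto simp: J_def)
        moreover have "0 < beta_density (a i) (b i) x"
          using calculation assms(2,3) by (intro beta_density_pos) auto
        ultimately show False using elim by simp
      qed
    qed
    hence "J \<in> null_sets lborel" by (subst AE_iff_null_sets) (auto simp: J_def)
    moreover have "emeasure lborel J \<noteq> 0"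
      using c01[of i] dpos by (simp add: J_def min_def max_def)
    ultimately show False by auto
  qed
  define box where "box = (\<Inter>i\<in>{..N}. A i)"
  have "prob box = (\<Prod>i\<in>{..N}. prob (A i))"
    unfolding box_def
  proof (rule indep_setsD)
    show "indep_sets (\<lambda>i. {V i -` A \<inter> space M |A. A \<in> sets ((\<lambda>_. borel) i)}) UNIV"
      using assms(4) by (simp add: indep_vars_def2)
  qed (auto simp: A_def)
  hence boxpos: "0 < prob box" using Apos by (simp add: prod_pos)
  have AE01: "AE \<omega> in M. \<forall>i. V i \<omega> \<in> {0..1}"
  proof (subst AE_all_countable, intro allI)
    fix i
    have "AE x in distr M lborel (V i). x \<in> {0..1}"
      unfolding distr_eq
      by (subst AE_density) (auto intro!: AE_I2 simp: beta_density_def split: if_splits)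
    thus "AE \<omega> in M. V i \<omega> \<in> {0..1}" by (rule AE_distrD[rotated]) simp
  qed
  define T where "T = {\<omega> \<in> space M. (\<Sum>i. \<bar>pstar i - stick_breaking (\<lambda>l. V l \<omega>) i\<bar>) < \<epsilon>}"
  have Tsets: "T \<in> sets M" unfolding T_def stick_breaking_def by measurable
  have "AE \<omega> in M. \<omega> \<in> box \<longrightarrow> \<omega> \<in> T"
    using AE01
  proof eventually_elim
    case (elim \<omega>)
    show ?case
    proof
      assume w: "\<omega> \<in> box"
      hence "\<forall>i<N. \<bar>V i \<omega> - c i\<bar> < \<delta>" "\<omega> \<in> space M"
        by (auto simp: box_def A_def abs_diff_less_iff)
      thus "\<omega> \<in> T" using det[of "\<lambda>l. V l \<omega>"] elim by (auto simp: T_def)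
    qed
  qed
  hence "emeasure M box \<le> emeasure M T" using Tsets by (rule emeasure_mono_AE)
  hence "prob box \<le> prob T" by (simp add: emeasure_eq_measure)
  thus ?thesis using boxpos by (simp add: T_def)
qed


end
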